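(* Let $\mu_0$ be a probability measure on $\mathbb R^3$ with $\int|v|^4\mu_0(dv)<\infty$ and $|\hat\mu_0(\xi)|=o(|\xi|^{-p})$ as $|\xi|\to\infty$ for some $p>0$. Assume moreover $\int v\,\mu_0(dv)=0$, $\int|v|^2\mu_0(dv)=3$, $\int v_i^2\mu_0(dv)=\sigma_i^2$ ($i=1,2,3$), $\int v_iv_j\mu_0(dv)=0$ for $i\ne j$ (so $\sigma_1^2+\sigma_2^2+\sigma_3^2=3$). Then there exists a constant $\lambda>0$ such that $$|\hat\mu_0(\xi)|\le\Big(\frac{\lambda^2}{\lambda^2+|\xi|^2}\Big)^q\qquad\text{for every }\xi\in\mathbb R^3,$$ where $q=1/(2\lceil 2/p\rceil)$.
   Context: $\hat\mu_0(\xi)=\int e^{i\xi\cdot v}\mu_0(dv)$; $\lceil x\rceil$ is the least integer not less than $x$. *)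

theory Defs
  imports "HOL-Probability.Probability" "HOL-Library.Landau_Symbols"
begin

definition fourier3 :: "(real^3) measure \<Rightarrow> real^3 \<Rightarrow> complex" where
  "fourier3 M \<xi> = (\<integral>v. cis (\<xi> \<bullet> v) \<partial>M)"

end

theory Submission
  imports Defs
begin

locale F3 = prob_space M for M :: "(real^3) measure" +
  assumes borel: "sets M = sets borel"
    and mom4: "integrable M (\<lambda>v. norm v ^ 4)"
begin

lemma bm:
  fixes f :: "real^3 \<Rightarrow> 'b::topological_space"
  shows "f \<in> borel_measurable borel \<Longrightarrow> f \<in> borel_measurable M"
proof -
  assume "f \<in> borel_measurable borel"
  moreover have "(borel_measurable M :: (real^3 \<Rightarrow> 'b) set) = borel_measurable borel" by (rule measurable_cong_sets[OF borel refl])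
  ultimately show ?thesis by simp
qed

lemma int_dom:
  fixes g :: "real^3 \<Rightarrow> 'b::{banach,second_countable_topology}"
  assumes "g \<in> borel_measurable borel" "\<And>v. norm (g v) \<le> 1 + norm v ^ 4"
  shows "integrable M g"
proof (rule Bochner_Integration.integrable_bound[where f="\<lambda>v. 1 + norm v ^ 4"])
  show "integrable M (\<lambda>v. 1 + norm v ^ 4)" using mom4 by auto
  show "g \<in> borel_measurable M" using bm assms(1) by blast
  show "AE x in M. norm (g x) \<le> norm (1 + norm x ^ 4)"
    using assms(2) by (auto intro!: AE_I2 order_trans[OF _ abs_ge_self])
qed

lemma pow_le: "(x::real) \<ge> 0 \<Longrightarrow> k \<le> 4 \<Longrightarrow> x ^ k \<le> 1 + x ^ 4"
proof (cases "x \<le> 1")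
  case True
  assume "x \<ge> 0" "k \<le> 4"
  then have "x ^ k \<le> 1" using True by (simp add: power_le_one)
  then show ?thesis by (smt (verit) zero_le_power \<open>x\<ge>0\<close>)
next
  case False
  assume "x \<ge> 0" "k \<le> 4"
  then have "x ^ k \<le> x ^ 4" using False by (intro power_increasing) auto
  then show ?thesis by simp
qed

lemma int_comp: "integrable M (\<lambda>v. v $ i)"
proof (rule int_dom)
  fix v :: "real^3"
  show "norm (v $ i) \<le> 1 + norm v ^ 4"
    using component_le_norm_cart[of v i] pow_le[of "norm v" 1] by simp
qed simp

lemma int_comp2: "integrable M (\<lambda>v. v $ i * v $ j)"
proof (rule int_dom)
  fix v :: "real^3"
  have "norm (v $ i * v $ j) \<le> norm v * norm v"
    using component_le_norm_cart[of v i] component_le_norm_cart[of v j]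
    by (simp add: abs_mult mult_mono)
  also have "\<dots> \<le> 1 + norm v ^ 4" using pow_le[of "norm v" 2] by (simp add: power2_eq_square)
  finally show "norm (v $ i * v $ j) \<le> 1 + norm v ^ 4" .
qed simp

lemma int_n3: "integrable M (\<lambda>v. norm v ^ 3)"
  by (rule int_dom) (auto intro: pow_le)

lemma int_cis: "integrable M (\<lambda>v. cis (\<xi> \<bullet> v))"
  by (rule integrable_const_bound[where B=1]) (auto intro!: bm simp: cis_conv_exp intro!: borel_measurable_continuous_onI continuous_intros)

lemma fourier_le1: "norm (fourier3 M \<xi>) \<le> 1"
proof -
  have "norm (fourier3 M \<xi>) \<le> (\<integral>v. norm (cis (\<xi> \<bullet> v)) \<partial>M)"
    unfolding fourier3_def by (rule integral_norm_bound)
  also have "\<dots> = 1" by (simp add: prob_space)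
  finally show ?thesis .
qed

lemma int_cos: "integrable M (\<lambda>v. cos (\<xi> \<bullet> v - c))"
  by (rule integrable_const_bound[where B=1]) (auto intro!: bm borel_measurable_continuous_onI continuous_intros)

lemma fourier_rot: "Re (cis (- c) * fourier3 M \<xi>) = (\<integral>v. cos (\<xi> \<bullet> v - c) \<partial>M)"
proof -
  have "cis (- c) * fourier3 M \<xi> = (\<integral>v. cis (- c) * cis (\<xi> \<bullet> v) \<partial>M)"
    unfolding fourier3_def by (rule integral_mult_right_zero[symmetric])
  also have "\<dots> = (\<integral>v. cis (\<xi> \<bullet> v - c) \<partial>M)"
    by (simp add: cis_mult)
  finally have "Re (cis (- c) * fourier3 M \<xi>) = Re (\<integral>v. cis (\<xi> \<bullet> v - c) \<partial>M)" by simp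
  also have "\<dots> = (\<integral>v. Re (cis (\<xi> \<bullet> v - c)) \<partial>M)"
    by (rule integral_Re[symmetric]) (rule integrable_const_bound[where B=1],
       auto intro!: bm simp: cis_conv_exp intro!: borel_measurable_continuous_onI continuous_intros)
  finally show ?thesis by simp
qed

lemma cos_double_ineq: "1 - cos (2 * y) \<le> 4 * (1 - cos (y::real))"
proof -
  have "1 - cos (2 * y) = 2 * (1 - cos y) * (1 + cos y)"
    using cos_double_cos[of y] by (simp add: algebra_simps power2_eq_square)
  also have "\<dots> \<le> 2 * (1 - cos y) * 2"
    by (intro mult_left_mono) auto
  finally show ?thesis by simp
qed

lemma doubling: "1 - norm (fourier3 M (2 *\<^sub>R \<xi>)) \<le> 4 * (1 - norm (fourier3 M \<xi>))"
proof -
  define z where "z = fourier3 M \<xi>"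
  define t where "t = Arg z"
  have "z = complex_of_real (cmod z) * cis t"
    using rcis_cmod_Arg[of z] by (simp add: rcis_def t_def)
  then have "cis (- t) * z = complex_of_real (cmod z)"
    by (metis cis_mult mult.left_commute add.left_inverse cis_zero mult_1_right)
  then have "norm z = (\<integral>v. cos (\<xi> \<bullet> v - t) \<partial>M)"
    using fourier_rot[of t \<xi>] by (simp add: z_def)
  moreover have "(\<integral>v. cos ((2 *\<^sub>R \<xi>) \<bullet> v - 2 * t) \<partial>M) \<le> norm (fourier3 M (2 *\<^sub>R \<xi>))"
  proof -
    have "(\<integral>v. cos ((2 *\<^sub>R \<xi>) \<bullet> v - 2 * t) \<partial>M) = Re (cis (- (2*t)) * fourier3 M (2 *\<^sub>R \<xi>))"
      using fourier_rot by simp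
    also have "\<dots> \<le> norm (cis (- (2*t)) * fourier3 M (2 *\<^sub>R \<xi>))" by (rule complex_Re_le_cmod)
    also have "\<dots> = norm (fourier3 M (2 *\<^sub>R \<xi>))" by (simp add: norm_mult)
    finally show ?thesis .
  qed
  moreover have "1 - (\<integral>v. cos ((2 *\<^sub>R \<xi>) \<bullet> v - 2 * t) \<partial>M) \<le> 4 * (1 - (\<integral>v. cos (\<xi> \<bullet> v - t) \<partial>M))"
  proof -
    have "1 - (\<integral>v. cos ((2 *\<^sub>R \<xi>) \<bullet> v - 2 * t) \<partial>M) = (\<integral>v. 1 - cos ((2 *\<^sub>R \<xi>) \<bullet> v - 2 * t) \<partial>M)"
      using Bochner_Integration.integral_diff[OF integrable_const int_cos, of 1 "2 *\<^sub>R \<xi>" "2*t"] by (simp add: prob_space)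
    also have "\<dots> \<le> (\<integral>v. 4 * (1 - cos (\<xi> \<bullet> v - t)) \<partial>M)"
    proof (rule integral_mono)
      show "integrable M (\<lambda>v. 1 - cos ((2 *\<^sub>R \<xi>) \<bullet> v - 2 * t))"
        by (rule Bochner_Integration.integrable_diff[OF integrable_const int_cos])
      show "integrable M (\<lambda>v. 4 * (1 - cos (\<xi> \<bullet> v - t)))" using int_cos by auto
      fix v
      have "1 - cos (2 * (\<xi> \<bullet> v - t)) \<le> 4 * (1 - cos (\<xi> \<bullet> v - t))" by (rule cos_double_ineq)
      then show "1 - cos ((2 *\<^sub>R \<xi>) \<bullet> v - 2 * t) \<le> 4 * (1 - cos (\<xi> \<bullet> v - t))"
        by (simp add: algebra_simps)
    qed
    also have "\<dots> = 4 * (1 - (\<integral>v. cos (\<xi> \<bullet> v - t) \<partial>M))"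
      using Bochner_Integration.integral_diff[OF integrable_const int_cos, of 1 \<xi> t]
      by (simp only: integral_mult_right_zero) (simp add: prob_space)
    finally show ?thesis .
  qed
  ultimately show ?thesis unfolding z_def by argo
qed

lemma cis_taylor: "cmod (cis x - (1 + \<i> * complex_of_real x - complex_of_real (x^2/2))) \<le> \<bar>x\<bar>^3/6"
  using iexp_approx1[of x 2] by (simp add: cis_conv_exp numeral_3_eq_3 numeral_2_eq_2 power2_eq_square algebra_simps)

lemma inner_sq: "(\<xi> \<bullet> v)^2 = (\<Sum>i\<in>UNIV. \<Sum>j\<in>UNIV. (\<xi>$i * \<xi>$j) * (v$i * v$j))" for \<xi> v :: "real^3"
  unfolding inner_vec_def power2_eq_square sum_product by (simp add: algebra_simps)

lemma int_X: "integrable M (\<lambda>v. \<xi> \<bullet> v)"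
  unfolding inner_vec_def by (auto intro!: Bochner_Integration.integrable_sum int_comp)

lemma int_X2: "integrable M (\<lambda>v. (\<xi> \<bullet> v)^2)"
  unfolding inner_sq by (auto intro!: Bochner_Integration.integrable_sum int_comp2)

lemma mean_X:
  assumes mean: "\<And>i. (\<integral>v. v $ i \<partial>M) = 0"
  shows "(\<integral>v. \<xi> \<bullet> v \<partial>M) = 0"
  unfolding inner_vec_def using int_comp
  by (simp add: Bochner_Integration.integral_sum mean)

lemma var_X:
  assumes cov: "\<And>i j. i \<noteq> j \<Longrightarrow> (\<integral>v. v $ i * v $ j \<partial>M) = 0"
  shows "(\<integral>v. (\<xi> \<bullet> v)^2 \<partial>M) = (\<Sum>i\<in>UNIV. (\<xi>$i)^2 * (\<integral>v. (v$i)^2 \<partial>M))"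
proof -
  have "(\<integral>v. (\<xi> \<bullet> v)^2 \<partial>M) = (\<Sum>i\<in>UNIV. \<Sum>j\<in>UNIV. (\<xi>$i * \<xi>$j) * (\<integral>v. v$i * v$j \<partial>M))"
    unfolding inner_sq using int_comp2
    by (simp add: Bochner_Integration.integral_sum Bochner_Integration.integrable_sum)
  also have "\<dots> = (\<Sum>i\<in>UNIV. \<Sum>j\<in>UNIV. if j = i then (\<xi>$i)^2 * (\<integral>v. (v$i)^2 \<partial>M) else 0)"
    by (intro sum.cong refl) (auto simp: cov power2_eq_square)
  also have "\<dots> = (\<Sum>i\<in>UNIV. (\<xi>$i)^2 * (\<integral>v. (v$i)^2 \<partial>M))"
    by simp
  finally show ?thesis .
qed

lemma taylor_bound:
  assumes mean: "\<And>i. (\<integral>v. v $ i \<partial>M) = 0"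
    and cov: "\<And>i j. i \<noteq> j \<Longrightarrow> (\<integral>v. v $ i * v $ j \<partial>M) = 0"
    and Q2: "(\<Sum>i\<in>UNIV. (\<xi>$i)^2 * (\<integral>v. (v$i)^2 \<partial>M)) \<le> 2"
  shows "norm (fourier3 M \<xi>) \<le> 1 - (\<Sum>i\<in>UNIV. (\<xi>$i)^2 * (\<integral>v. (v$i)^2 \<partial>M)) / 2
            + norm \<xi> ^ 3 * (\<integral>v. norm v ^ 3 \<partial>M) / 6"
proof -
  define Q where "Q = (\<Sum>i\<in>UNIV. (\<xi>$i)^2 * (\<integral>v. (v$i)^2 \<partial>M))"
  define R where "R v = cis (\<xi> \<bullet> v) - (1 + \<i> * complex_of_real (\<xi> \<bullet> v) - complex_of_real ((\<xi> \<bullet> v)^2/2))" for v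
  have RI: "integrable M R"
    unfolding R_def
    by (intro Bochner_Integration.integrable_diff Bochner_Integration.integrable_add int_cis integrable_const
          integrable_mult_right integrable_of_real int_X int_X2 integrable_divide)
  have Q0: "Q \<ge> 0" unfolding Q_def
    by (intro sum_nonneg mult_nonneg_nonneg) auto
  have pw: "cis (\<xi> \<bullet> v) = complex_of_real (1 - (\<xi> \<bullet> v)^2/2) + \<i> * complex_of_real (\<xi> \<bullet> v) + R v" for v
    unfolding R_def by simp
  have "fourier3 M \<xi> = (\<integral>v. complex_of_real (1 - (\<xi> \<bullet> v)^2/2) + \<i> * complex_of_real (\<xi> \<bullet> v) + R v \<partial>M)"
    unfolding fourier3_def pw ..
  also have "\<dots> = complex_of_real (\<integral>v. 1 - (\<xi> \<bullet> v)^2/2 \<partial>M) + \<i> * complex_of_real (\<integral>v. \<xi> \<bullet> v \<partial>M) + (\<integral>v. R v \<partial>M)"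
  proof -
    have IA: "integrable M (\<lambda>v. complex_of_real (1 - (\<xi> \<bullet> v)^2/2))"
      by (intro integrable_of_real Bochner_Integration.integrable_diff integrable_const integrable_divide int_X2)
    have IB: "integrable M (\<lambda>v. \<i> * complex_of_real (\<xi> \<bullet> v))"
      by (intro integrable_mult_right integrable_of_real int_X)
    show ?thesis
      by (simp only: Bochner_Integration.integral_add[OF Bochner_Integration.integrable_add[OF IA IB] RI]
          Bochner_Integration.integral_add[OF IA IB] integral_complex_of_real integral_mult_right_zero)
  qed
  also have "(\<integral>v. 1 - (\<xi> \<bullet> v)^2/2 \<partial>M) = 1 - Q/2"
    using int_X2 var_X[OF cov, of \<xi>] by (simp add: prob_space Q_def)
  also have "(\<integral>v. \<xi> \<bullet> v \<partial>M) = 0" by (rule mean_X[OF mean])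
  finally have eq: "fourier3 M \<xi> = complex_of_real (1 - Q/2) + (\<integral>v. R v \<partial>M)" by simp
  have "norm (\<integral>v. R v \<partial>M) \<le> (\<integral>v. norm (R v) \<partial>M)" by (rule integral_norm_bound)
  also have "\<dots> \<le> (\<integral>v. norm \<xi> ^ 3 * norm v ^ 3 / 6 \<partial>M)"
  proof (rule integral_mono)
    show "integrable M (\<lambda>v. norm (R v))" using RI by auto
    show "integrable M (\<lambda>v. norm \<xi> ^ 3 * norm v ^ 3 / 6)" using int_n3 by auto
    fix v
    have "norm (R v) \<le> \<bar>\<xi> \<bullet> v\<bar>^3/6" unfolding R_def by (rule cis_taylor)
    also have "\<dots> \<le> (norm \<xi> * norm v)^3/6"
      by (intro divide_right_mono power_mono Cauchy_Schwarz_ineq2) auto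
    finally show "norm (R v) \<le> norm \<xi> ^ 3 * norm v ^ 3 / 6" by (simp add: power_mult_distrib)
  qed
  also have "\<dots> = norm \<xi> ^ 3 * (\<integral>v. norm v ^ 3 \<partial>M) / 6" by simp
  finally have Rb: "norm (\<integral>v. R v \<partial>M) \<le> norm \<xi> ^ 3 * (\<integral>v. norm v ^ 3 \<partial>M) / 6" .
  have "norm (fourier3 M \<xi>) \<le> norm (complex_of_real (1 - Q/2)) + norm (\<integral>v. R v \<partial>M)"
    unfolding eq by (rule norm_triangle_ineq)
  also have "norm (complex_of_real (1 - Q/2)) = 1 - Q/2"
    using Q2 unfolding Q_def[symmetric] norm_of_real by simp
  finally show ?thesis using Rb unfolding Q_def by linarith
qed

lemma degenerate:
  assumes "(\<integral>v. (v$i)^2 \<partial>M) = 0"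
  shows "fourier3 M (t *\<^sub>R axis i 1) = 1"
proof -
  have "AE v in M. (v$i)^2 = 0"
    using assms int_comp2[of i i] by (subst integral_nonneg_eq_0_iff_AE[symmetric]) (auto simp: power2_eq_square)
  then have "AE v in M. cis ((t *\<^sub>R axis i 1) \<bullet> v) = 1"
    proof eventually_elim
    case (elim v)
    have "axis i 1 \<bullet> v = v $ i" using inner_axis[of v i 1] by (simp add: inner_commute)
    then show ?case using elim by simp
  qed
  then have "fourier3 M (t *\<^sub>R axis i 1) = (\<integral>v. 1 \<partial>M)"
    unfolding fourier3_def by (rule integral_cong_AE[rotated 2]) (auto intro!: bm simp: cis_conv_exp intro!: borel_measurable_continuous_onI continuous_intros)
  then show ?thesis by (simp add: prob_space)
qed

lemma doubling_iter: "1 - norm (fourier3 M ((2^n) *\<^sub>R \<xi>)) \<le> 4^n * (1 - norm (fourier3 M \<xi>))"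
proof (induction n)
  case 0
  then show ?case by simp
next
  case (Suc n)
  have "(2^(Suc n)) *\<^sub>R \<xi> = 2 *\<^sub>R ((2^n) *\<^sub>R \<xi>)" by simp
  then have "1 - norm (fourier3 M ((2^(Suc n)) *\<^sub>R \<xi>)) \<le> 4 * (1 - norm (fourier3 M ((2^n) *\<^sub>R \<xi>)))"
    using doubling[of "(2^n) *\<^sub>R \<xi>"] by simp
  also have "\<dots> \<le> 4 * (4^n * (1 - norm (fourier3 M \<xi>)))" using Suc by simp
  finally show ?case by simp
qed

end

lemma norm_sq3: "norm \<xi> ^ 2 = (\<Sum>i\<in>UNIV. (\<xi> $ i)^2)" for \<xi> :: "real^3"
  unfolding power2_norm_eq_inner inner_vec_def by (simp add: power2_eq_square)

lemma tail_small:
  fixes p R n :: real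
  assumes "p > 0" "1 \<le> R" "4 \<le> R powr (p/2)" "R \<le> n"
  shows "n powr (-p) \<le> n powr (-(p/2))" "n powr (-(p/2)) \<le> 1/4"
proof -
  have n1: "1 \<le> n" using assms by linarith
  show "n powr (-p) \<le> n powr (-(p/2))"
    using n1 assms(1) by (intro powr_mono) auto
  have "n powr (-(p/2)) \<le> R powr (-(p/2))"
    using assms by (intro powr_mono2') auto
  also have "\<dots> = 1 / R powr (p/2)" by (rule powr_minus_divide)
  also have "\<dots> \<le> 1/4" using assms(3) by (intro divide_left_mono) auto
  finally show "n powr (-(p/2)) \<le> 1/4" .
qed

lemma lower_q:
  fixes lam n q :: real
  assumes "lam > 0" "0 < q" "q \<le> 1"
  shows "1 - n^2/lam^2 \<le> (lam^2 / (lam^2 + n^2)) powr q"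
proof -
  define y where "y = lam^2 / (lam^2 + n^2)"
  have pos: "lam^2 + n^2 > 0" using assms by (simp add: add_pos_nonneg)
  have y0: "0 < y" "y \<le> 1" using assms pos unfolding y_def by (auto simp: divide_le_eq_1)
  have "y = y powr 1" using y0 by simp
  also have "\<dots> \<le> y powr q" using y0 assms by (intro powr_mono') auto
  finally have "y \<le> y powr q" .
  moreover have "1 - n^2/lam^2 \<le> y"
  proof -
    have "1 - n^2/lam^2 \<le> 1 - n^2/(lam^2 + n^2)"
      using assms pos by (intro diff_left_mono divide_left_mono) auto
    also have "\<dots> = y" unfolding y_def using assms by (simp add: field_simps add_pos_nonneg)
    finally show ?thesis .
  qed
  ultimately show ?thesis unfolding y_def by linarith
qed

lemma regC:
  fixes p q R n lam :: real
  assumes "p > 0" "0 < q" "q \<le> 1" "2*q \<le> p/2" "1 \<le> R" "4 \<le> R powr (p/2)" "R \<le> n" "1 \<le> lam"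
  shows "n powr (-p) \<le> (lam^2 / (lam^2 + n^2)) powr q"
proof -
  have n1: "1 \<le> n" using assms by linarith
  have "1 / (2 * n^2) \<le> lam^2 / (lam^2 + n^2)"
  proof -
    have "lam^2 \<le> lam^2 * n^2" using n1 assms by (simp add: one_le_power)
    moreover have "n^2 \<le> lam^2 * n^2" using n1 assms by (simp add: one_le_power)
    ultimately have "lam^2 + n^2 \<le> 2 * (lam^2 * n^2)" by linarith
    then have "lam^2 + n^2 \<le> lam^2 * (2 * n^2)" by (simp add: algebra_simps)
    moreover have "0 < lam^2 + n^2" "0 < 2 * n^2" using n1 assms by (auto intro: add_pos_pos)
    ultimately show ?thesis by (simp add: divide_simps)
  qed
  then have A: "(1 / (2 * n^2)) powr q \<le> (lam^2 / (lam^2 + n^2)) powr q"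
    using n1 assms by (intro powr_mono2) auto
  have B: "(1 / (2 * n^2)) powr q = 1 / (2 powr q * n powr (2*q))"
  proof -
    have "n^2 = n powr 2" using n1 by (simp add: powr_realpow)
    then have "(n^2) powr q = n powr (2*q)" by (simp add: powr_powr)
    moreover have "(1 / (2 * n^2)) powr q = 1 / ((2 * n^2) powr q)"
      using n1 by (simp add: powr_divide)
    moreover have "(2 * n^2) powr q = 2 powr q * (n^2) powr q"
      using n1 by (simp add: powr_mult)
    ultimately show ?thesis by simp
  qed
  have C: "n powr (-p) * (2 powr q * n powr (2*q)) \<le> 1"
  proof -
    have "n powr (-p) * (2 powr q * n powr (2*q)) = 2 powr q * n powr (2*q - p)"
    proof -
      have "n powr (2*q) * n powr (-p) = n powr (2*q + (-p))" by (rule powr_add[symmetric])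
      then show ?thesis by (simp add: mult.assoc mult.left_commute[of "n powr (-p)"] mult.commute[of "n powr (-p)"])
    qed
    also have "\<dots> \<le> 2 * n powr (-(p/2))"
    proof (rule mult_mono)
      show "2 powr q \<le> 2" using assms powr_mono[of q 1 2] by simp
      show "n powr (2*q - p) \<le> n powr (-(p/2))" using n1 assms by (intro powr_mono) auto
    qed auto
    also have "\<dots> \<le> 2 * (1/4)" using tail_small(2)[OF assms(1,5,6,7)] by simp
    finally show ?thesis by simp
  qed
  have "n powr (-p) \<le> 1 / (2 powr q * n powr (2*q))"
    using C n1 by (simp add: field_simps)
  then have "n powr (-p) \<le> (1 / (2 * n^2)) powr q" by (simp only: B)
  then show ?thesis using A by (rule order_trans)
qed
theorem proposition2p1:
  fixes M :: "(real^3) measure" and p :: real and \<sigma> :: "3 \<Rightarrow> real"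
  assumes prob: "prob_space M"
    and borel: "sets M = sets borel"
    and mom4: "integrable M (\<lambda>v. norm v ^ 4)"
    and p_pos: "p > 0"
    and decay: "(\<lambda>\<xi>. norm (fourier3 M \<xi>)) \<in> o[at_infinity](\<lambda>\<xi>. norm \<xi> powr (- p))"
    and mean: "\<And>i. (\<integral>v. v $ i \<partial>M) = 0"
    and energy: "(\<integral>v. norm v ^ 2 \<partial>M) = 3"
    and var: "\<And>i. (\<integral>v. (v $ i)^2 \<partial>M) = (\<sigma> i)^2"
    and cov: "\<And>i j. i \<noteq> j \<Longrightarrow> (\<integral>v. v $ i * v $ j \<partial>M) = 0"
  shows "\<exists>lam>0. \<forall>\<xi>::real^3. norm (fourier3 M \<xi>)
           \<le> (lam^2 / (lam^2 + norm \<xi> ^ 2)) powr (1 / (2 * real_of_int \<lceil>2 / p\<rceil>))"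
proof -
  interpret F3 M using prob borel mom4 by (simp add: F3_def F3_axioms_def)
  define k where "k = \<lceil>2/p\<rceil>"
  define q where "q = 1 / (2 * real_of_int k)"
  have k1: "2/p \<le> real_of_int k" unfolding k_def by simp
  have kpos: "1 \<le> real_of_int k"
  proof -
    have "0 < real_of_int k" using k1 p_pos by (smt (verit) divide_pos_pos)
    then have "0 < k" by simp
    then show ?thesis by simp
  qed
  have q0: "0 < q" "q \<le> 1" using kpos unfolding q_def by auto
  have q2: "2 * q \<le> p / 2"
  proof -
    have "2 * q = 1 / real_of_int k" unfolding q_def by simp
    also have "\<dots> \<le> p/2"
    proof -
      have "2 \<le> real_of_int k * p" using k1 p_pos by (simp add: pos_divide_le_eq)
      then show ?thesis using kpos by (simp add: divide_le_eq field_simps)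
    qed
    finally show ?thesis .
  qed
  have "\<forall>\<^sub>F \<xi> in at_infinity. norm (norm (fourier3 M \<xi>)) \<le> 1 * norm (norm \<xi> powr (- p))"
    by (rule landau_o.smallD[OF decay]) simp
  then obtain b where hb: "\<And>\<xi>. norm \<xi> \<ge> b \<Longrightarrow> norm (fourier3 M \<xi>) \<le> norm \<xi> powr (- p)"
    unfolding eventually_at_infinity by auto
  define R where "R = max b (max 1 (4 powr (2/p)))"
  have R1: "1 \<le> R" unfolding R_def by simp
  have Rp: "4 \<le> R powr (p/2)"
  proof -
    have "(4 powr (2/p)) powr (p/2) \<le> R powr (p/2)"
      unfolding R_def using p_pos by (intro powr_mono2) auto
    moreover have "(4 powr (2/p)) powr (p/2) = (4::real)"
      using p_pos by (simp add: powr_powr)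
    ultimately show ?thesis by simp
  qed
  have tail: "norm (fourier3 M \<xi>) \<le> norm \<xi> powr (- p)" "norm (fourier3 M \<xi>) \<le> 1/4"
    if "R \<le> norm \<xi>" for \<xi> :: "real^3"
  proof -
    show "norm (fourier3 M \<xi>) \<le> norm \<xi> powr (- p)" using hb that unfolding R_def by simp
    then show "norm (fourier3 M \<xi>) \<le> 1/4"
      using tail_small[OF p_pos R1 Rp that] by linarith
  qed
  define sv where "sv i = (\<integral>v. (v$i)^2 \<partial>M)" for i :: 3
  have sv_pos: "0 < sv i" for i
  proof -
    have "0 \<le> sv i" unfolding sv_def by (rule Bochner_Integration.integral_nonneg) auto
    moreover have "sv i \<noteq> 0"
    proof
      assume "sv i = 0"
      then have "fourier3 M (R *\<^sub>R axis i (1::real)) = 1" using degenerate[of i R] unfolding sv_def by simp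
      moreover have "norm (R *\<^sub>R axis i (1::real)) = R" using R1 by simp
      ultimately show False using tail(2)[of "R *\<^sub>R axis i (1::real)"] by simp
    qed
    ultimately show ?thesis by simp
  qed
  define s where "s = Min (range sv)"
  define S where "S = Max (range sv)"
  have s_in: "s \<in> range sv" unfolding s_def by (intro Min_in) auto
  have s0: "0 < s" using s_in sv_pos by auto
  have s_le: "s \<le> sv i" for i unfolding s_def by (intro Min_le) auto
  have S_ge: "sv i \<le> S" for i unfolding S_def by (intro Max_ge) auto
  have S0: "0 < S" using S_ge[of 1] sv_pos[of 1] by simp
  have Qlow: "s * norm \<xi>^2 \<le> (\<Sum>i\<in>UNIV. (\<xi>$i)^2 * sv i)" for \<xi> :: "real^3"
    unfolding norm_sq3 sum_distrib_left
    by (intro sum_mono) (simp add: s_le mult.commute mult_right_mono)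
  have Qup: "(\<Sum>i\<in>UNIV. (\<xi>$i)^2 * sv i) \<le> S * norm \<xi>^2" for \<xi> :: "real^3"
    unfolding norm_sq3 sum_distrib_left
    by (intro sum_mono) (simp add: S_ge mult.commute mult_right_mono)
  define M3 where "M3 = (\<integral>v. norm v ^ 3 \<partial>M)"
  have M30: "0 \<le> M3" unfolding M3_def by (rule Bochner_Integration.integral_nonneg) auto
  define r where "r = min 1 (min (2/S) (3 * s /(2*(M3+1))))"
  have r0: "0 < r" unfolding r_def using S0 s0 M30 by auto
  have regA: "norm (fourier3 M \<xi>) \<le> 1 - s/4 * norm \<xi>^2" if "norm \<xi> \<le> r" for \<xi> :: "real^3"
  proof -
    define n where "n = norm \<xi>"
    define Q where "Q = (\<Sum>i\<in>UNIV. (\<xi>$i)^2 * sv i)"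
    have n0: "0 \<le> n" "n \<le> r" using that unfolding n_def by auto
    have r1: "r \<le> 1" "r \<le> 2/S" "r \<le> 3 * s /(2*(M3+1))" unfolding r_def by auto
    have "n*n \<le> r*r" using n0 by (intro mult_mono) auto
    moreover have "r * r \<le> r * 1" using r1 r0 by (intro mult_left_mono) auto
    ultimately have "n^2 \<le> r" by (simp add: power2_eq_square)
    then have "S * n^2 \<le> S * (2/S)" using r1 S0 by (intro mult_left_mono) auto
    then have Q2: "Q \<le> 2" using Qup[of \<xi>] S0 unfolding Q_def n_def by simp
    have T: "norm (fourier3 M \<xi>) \<le> 1 - Q/2 + n^3 * M3 / 6"
      using taylor_bound[OF mean cov] Q2 unfolding Q_def sv_def n_def M3_def by blast
    have "n * M3 \<le> r * (M3 + 1)" using n0 M30 by (intro mult_mono) auto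
    also have "\<dots> \<le> 3 * s /(2*(M3+1)) * (M3+1)" using r1 M30 by (intro mult_right_mono) auto
    also have "\<dots> = 3 * s /2" using M30 by (simp add: field_simps)
    finally have "n * M3 \<le> 3 * s /2" .
    then have "n^2 * (n * M3) \<le> n^2 * (3 * s /2)" by (intro mult_left_mono) auto
    then have "n^3 * M3 / 6 \<le> s/4 * n^2" by (simp add: power3_eq_cube power2_eq_square algebra_simps)
    moreover have "s * n^2 \<le> Q" using Qlow[of \<xi>] unfolding Q_def n_def .
    ultimately show ?thesis using T unfolding n_def by linarith
  qed
  obtain N :: nat where hN: "R / r < 2^N" using real_arch_pow[of 2 "R/r"] by auto
  define \<delta> :: real where "\<delta> = 3 / (4 * 4^N)"
  have d0: "0 < \<delta>" unfolding \<delta>_def by simp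
  have regB: "norm (fourier3 M \<xi>) \<le> 1 - \<delta>" if "r \<le> norm \<xi>" for \<xi> :: "real^3"
  proof -
    have "R < 2^N * r" using hN r0 by (simp add: divide_less_eq mult.commute)
    also have "\<dots> \<le> 2^N * norm \<xi>" using that by simp
    also have "\<dots> = norm ((2^N) *\<^sub>R \<xi>)" by simp
    finally have "norm (fourier3 M ((2^N) *\<^sub>R \<xi>)) \<le> 1/4" using tail(2) by simp
    then have "3/4 \<le> 4^N * (1 - norm (fourier3 M \<xi>))" using doubling_iter[of N \<xi>] by linarith
    then have "3 / (4 * 4^N) \<le> 1 - norm (fourier3 M \<xi>)" by (simp add: divide_le_eq mult.commute)
    then show ?thesis unfolding \<delta>_def by linarith
  qed
  define lam where "lam = 1 + 4/s + R^2/\<delta>"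
  have lam1: "1 \<le> lam" unfolding lam_def using s0 d0 by simp
  have lam2: "lam \<le> lam^2" using lam1 by (simp add: power2_eq_square)
  have nn: "0 \<le> 4/s" "0 \<le> R^2/\<delta>" using s0 d0 by auto
  have lamA: "4/s \<le> lam^2" "R^2/\<delta> \<le> lam^2" using lam2 nn unfolding lam_def by linarith+
  have "\<forall>\<xi>::real^3. norm (fourier3 M \<xi>) \<le> (lam^2 / (lam^2 + norm \<xi> ^ 2)) powr q"
  proof
    fix \<xi> :: "real^3"
    define n where "n = norm \<xi>"
    have lp: "0 < lam^2" using lam1 by simp
    show "norm (fourier3 M \<xi>) \<le> (lam^2 / (lam^2 + norm \<xi> ^ 2)) powr q"
    proof (cases "R \<le> n")
      case True
      then show ?thesis using tail(1)[of \<xi>] regC[OF p_pos q0 q2 R1 Rp True lam1] unfolding n_def by linarith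
    next
      case False
      have low: "1 - n^2/lam^2 \<le> (lam^2 / (lam^2 + n ^ 2)) powr q"
        using lower_q[of lam q n] lam1 q0 by simp
      show ?thesis
      proof (cases "n \<le> r")
        case True
        have "n^2/lam^2 \<le> s/4 * n^2"
        proof -
          have "1/lam^2 \<le> s/4" using lamA(1) s0 lp by (simp add: divide_le_eq field_simps)
          then have "n^2 * (1/lam^2) \<le> n^2 * (s/4)" by (intro mult_left_mono) auto
          then show ?thesis by (simp add: mult.commute)
        qed
        then show ?thesis using regA[of \<xi>] True low unfolding n_def by linarith
      next
        case False
        have "n^2/lam^2 \<le> R^2/lam^2"
          using \<open>\<not> R \<le> n\<close> n_def lp by (intro divide_right_mono power_mono) auto
        also have "\<dots> \<le> \<delta>" using lamA(2) d0 lp by (simp add: divide_le_eq field_simps)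
        finally show ?thesis using regB[of \<xi>] False low unfolding n_def by linarith
      qed
    qed
  qed
  moreover have "0 < lam" using lam1 by simp
  ultimately show ?thesis unfolding q_def k_def by blast
qed

end
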